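(* Let $T,\nu,\varepsilon>0$ and let $q_{\nu,\varepsilon}$ be the viscous solution described in the context. Let $c_0:=\inf_{x\in\mathbb R}o(x)>0$ and $\tilde K:=\|V_\varepsilon'\|_{L^\infty([c_0,\infty))}$. Then for all $(t,x)\in[0,T]\times\mathbb R$, $q_{\nu,\varepsilon}(t,x)\ge-\frac{\nu\|o''\|_{L^\infty(\mathbb R)}}{\|o'\|_{L^\infty(\mathbb R)}\tilde K}\Big(-1+\exp\big(\tilde K\|o'\|_{L^\infty(\mathbb R)}t\big)\Big).$
   Context: $V\in C^\infty([0,\infty))$ satisfies: $\lim_{x\to\infty}V(x)=1$; $V(0)=0$; $V>0$ on $(0,\infty)$; $(-1)^{k+1}V^{(k)}>0$ on $[0,\infty)$ for all $k\in\mathbb N$; $V^{(k)}\in L^\infty([0,\infty))$ for all $k$ and $\|V\|_{L^\infty([0,\infty))}=1$; $\sup_{\varepsilon>0}\|V_\varepsilon'\|_{L^\infty([\tilde c,\infty))}<\infty$ for all $\tilde c>0$; $-\infty<\inf_{y\ge0}\frac{V''(y)}{V'(y)}\le\sup_{y\ge0}\frac{V''(y)}{V'(y)}<0$; and $\lim_{x\to\infty}xV_\varepsilon^{(k)}(x)=0$ for all $k$. Here $V_\varepsilon(x):=V(x/\varepsilon)$. The data: $q_0\in BV(\mathbb R;\mathbb R_{\ge0})$; $o\in W^{6,\infty}(\mathbb R)$, $o'\in W^{6,1}(\mathbb R)$, $\operatorname{ess\,inf}_{x}(o(x)-q_0(x))>0$, and $\lim_{x\to\pm\infty}o(x)$ exist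 in $\mathbb R$. $q_{0,\nu}:=\varphi_\nu*q_0$ with $\varphi_\nu(x)=\nu^{-1}\varphi(x/\nu)$, $\varphi$ the standard mollifier. $q_{\nu,\varepsilon}$ is the unique $H^5((0,T)\times\mathbb R)$ solution of $\partial_tq+\partial_x\big(V_\varepsilon(o(x)-q)q\big)=\nu\partial_x^2(q-o)$ on $(0,T)\times\mathbb R$, $q(0,\cdot)=q_{0,\nu}$. *)

theory Defs
  imports "HOL-Analysis.Analysis"
begin

definition std_mollifier_raw :: "real \<Rightarrow> real" where
  "std_mollifier_raw x = (if \<bar>x\<bar> < 1 then exp (1 / (x\<^sup>2 - 1)) else 0)"

definition std_mollifier :: "real \<Rightarrow> real" where
  "std_mollifier x = std_mollifier_raw x / (LINT y|lborel. std_mollifier_raw y)"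

definition mollifier :: "real \<Rightarrow> real \<Rightarrow> real" where
  "mollifier \<nu> x = std_mollifier (x / \<nu>) / \<nu>"

definition mollify :: "real \<Rightarrow> (real \<Rightarrow> real) \<Rightarrow> real \<Rightarrow> real" where
  "mollify \<nu> f x = (LINT y|lborel. mollifier \<nu> (x - y) * f y)"

definition bounded_variation :: "(real \<Rightarrow> real) \<Rightarrow> bool" where
  "bounded_variation f \<longleftrightarrow>
     (\<exists>M. \<forall>xs::real list. sorted xs \<longrightarrow>
        (\<Sum>i<length xs - 1. \<bar>f (xs ! Suc i) - f (xs ! i)\<bar>) \<le> M)"

text \<open>Hypotheses on V. Vd k is the k-th derivative of V = Vd 0 (on [0,infinity)).\<close>
definition admissible_V :: "(nat \<Rightarrow> real \<Rightarrow> real) \<Rightarrow> bool" where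
  "admissible_V Vd \<longleftrightarrow>
     (\<forall>k. \<forall>x\<ge>0. (Vd k has_real_derivative Vd (Suc k) x) (at x within {0..})) \<and>
     (Vd 0 \<longlongrightarrow> 1) at_top \<and>
     Vd 0 0 = 0 \<and>
     (\<forall>x>0. Vd 0 x > 0) \<and>
     (\<forall>k\<ge>1. \<forall>x\<ge>0. (-1) ^ (k + 1) * Vd k x > 0) \<and>
     (\<forall>k. \<exists>B. \<forall>x\<ge>0. \<bar>Vd k x\<bar> \<le> B) \<and>
     (SUP x\<in>{0..}. \<bar>Vd 0 x\<bar>) = 1 \<and>
     (\<forall>c>0. \<exists>B. \<forall>\<epsilon>>0. \<forall>x\<ge>c. \<bar>Vd 1 (x / \<epsilon>) / \<epsilon>\<bar> \<le> B) \<and>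
     (\<exists>a b. b < 0 \<and> (\<forall>y\<ge>0. a \<le> Vd 2 y / Vd 1 y \<and> Vd 2 y / Vd 1 y \<le> b)) \<and>
     (\<forall>\<epsilon>>0. \<forall>k\<ge>1. ((\<lambda>x. x * (Vd k (x / \<epsilon>) / \<epsilon> ^ k)) \<longlongrightarrow> 0) at_top)"

text \<open>Hypotheses on o: od k is the k-th derivative of o = od 0.
  o in W^{6,infinity}: od 0..od 5 bounded, od 5 Lipschitz (od 6 its a.e./weak derivative);
  o' in W^{6,1}: od 1..od 6 Lebesgue integrable; limits at +-infinity exist.\<close>
definition admissible_o :: "(nat \<Rightarrow> real \<Rightarrow> real) \<Rightarrow> bool" where
  "admissible_o od \<longleftrightarrow>
     (\<forall>k<5. \<forall>x. (od k has_real_derivative od (Suc k) x) (at x)) \<and>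
     (\<forall>k\<le>5. bounded (range (od k))) \<and>
     (\<exists>L. \<forall>x y. \<bar>od 5 x - od 5 y\<bar> \<le> L * \<bar>x - y\<bar>) \<and>
     (\<forall>a b. a \<le> b \<longrightarrow> od 5 b - od 5 a = (LINT y:{a..b}|lborel. od 6 y)) \<and>
     (\<forall>k\<in>{1..6}. integrable lborel (od k)) \<and>
     (\<exists>l. (od 0 \<longlongrightarrow> l) at_top) \<and>
     (\<exists>l. (od 0 \<longlongrightarrow> l) at_bot)"


text \<open>q : [0,T] x R -> R (argument (t,x)) is a solution of
  q_t + (V_eps(o(x) - q) q)_x = nu (q - o)_xx on (0,T) x R, q(0,.) = q_init,
  in H^5((0,T) x R). H^5 membership is rendered classically: D i j denotes the
  partial derivative d_t^i d_x^j q, these exist and are continuous on the open strip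
  for i + j <= 5 and are square integrable there; q is continuous up to t = 0 and t = T
  (H^5 embeds into C^3 of the closed strip).\<close>
definition viscous_solution ::
  "(nat \<Rightarrow> real \<Rightarrow> real) \<Rightarrow> (nat \<Rightarrow> real \<Rightarrow> real) \<Rightarrow> real \<Rightarrow> real \<Rightarrow> real \<Rightarrow>
   (real \<Rightarrow> real) \<Rightarrow> (real \<times> real \<Rightarrow> real) \<Rightarrow> bool" where
  "viscous_solution Vd od \<epsilon> \<nu> T q_init q \<longleftrightarrow>
     (\<exists>D :: nat \<Rightarrow> nat \<Rightarrow> real \<times> real \<Rightarrow> real.
        D 0 0 = q \<and>
        (\<forall>i j. i + j < 5 \<longrightarrow> (\<forall>t\<in>{0<..<T}. \<forall>x.
            ((\<lambda>s. D i j (s, x)) has_real_derivative D (Suc i) j (t, x)) (at t) \<and>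
            ((\<lambda>y. D i j (t, y)) has_real_derivative D i (Suc j) (t, x)) (at x))) \<and>
        (\<forall>i j. i + j \<le> 5 \<longrightarrow>
            continuous_on ({0<..<T} \<times> UNIV) (D i j) \<and>
            set_integrable lborel ({0<..<T} \<times> UNIV) (\<lambda>z. (D i j z)\<^sup>2)) \<and>
        continuous_on ({0..T} \<times> UNIV) q \<and>
        (\<forall>x. q (0, x) = q_init x) \<and>
        (\<forall>t\<in>{0<..<T}. \<forall>x.
            ((\<lambda>y. Vd 0 ((od 0 y - q (t, y)) / \<epsilon>) * q (t, y)) has_real_derivative
               (\<nu> * (D 0 2 (t, x) - od 2 x) - D 1 0 (t, x))) (at x)))"

end

theory Submission
  imports Defs
begin


lemma ftc_abs_bound:
  fixes f f' g :: "real \<Rightarrow> real"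
  assumes ab: "a \<le> b"
    and d: "\<And>x. x \<in> {a..b} \<Longrightarrow> (f has_real_derivative f' x) (at x)"
    and g: "continuous_on {a..b} g"
    and le: "\<And>x. x \<in> {a..b} \<Longrightarrow> \<bar>f' x\<bar> \<le> g x"
  shows "ennreal \<bar>f b - f a\<bar> \<le> (\<integral>\<^sup>+x. ennreal (g x) * indicator {a..b} x \<partial>lborel)"
proof -
  have hi: "(f' has_integral (f b - f a)) {a..b}"
    by (rule fundamental_theorem_of_calculus[OF ab])
       (metis has_real_derivative_iff_has_vector_derivative has_field_derivative_at_within d)
  have gi: "g integrable_on {a..b}" using g integrable_continuous_interval by blast
  have "norm (integral {a..b} f') \<le> integral {a..b} g"
    by (rule integral_norm_bound_integral) (use hi gi le in auto)
  then have "\<bar>f b - f a\<bar> \<le> integral {a..b} g" using hi by (simp add: integral_unique)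
  moreover have "(\<integral>\<^sup>+x. ennreal (g x) * indicator {a..b} x \<partial>lborel) = ennreal (integral {a..b} g)"
    apply (rule nn_integral_has_integral_lebesgue')
    using le apply (meson abs_ge_zero order_trans)
    using gi by blast
  ultimately show ?thesis by (simp add: ennreal_leI)
qed

lemma exists_below_avg:
  fixes f :: "'a \<Rightarrow> ennreal"
  assumes A: "A \<in> sets M" and lt: "(\<integral>\<^sup>+x. f x * indicator A x \<partial>M) < c * emeasure M A"
  shows "\<exists>x\<in>A. f x < c"
proof (rule ccontr)
  assume "\<not> ?thesis"
  then have "\<And>x. x \<in> space M \<Longrightarrow> c * indicator A x \<le> f x * indicator A x"
    by (auto simp: indicator_def not_less)
  then have "(\<integral>\<^sup>+x. c * indicator A x \<partial>M) \<le> (\<integral>\<^sup>+x. f x * indicator A x \<partial>M)"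
    by (intro nn_integral_mono) auto
  then show False using lt A by (simp add: nn_integral_cmult_indicator)
qed

lemma second_deriv_min:
  fixes f f' :: "real \<Rightarrow> real"
  assumes d: "\<And>y. (f has_real_derivative f' y) (at y)"
    and d2: "(f' has_real_derivative l) (at x)"
    and m: "\<And>y. f x \<le> f y"
  shows "f' x = 0" "0 \<le> l"
proof -
  show f0: "f' x = 0"
    using DERIV_local_min[OF d[of x], of 1] m by auto
  show "0 \<le> l"
  proof (rule ccontr)
    assume "\<not> 0 \<le> l"
    then obtain e where e: "e > 0" "\<And>h. h > 0 \<Longrightarrow> h < e \<Longrightarrow> f' (x + h) < f' x"
      using DERIV_neg_dec_right[OF d2] by force
    have "x < x + e/2" using e by simp
    from MVT2[OF this, of f f'] d obtain z where z: "z > x" "z < x + e/2"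
      "f (x + e/2) - f x = (x + e/2 - x) * f' z" by blast
    have "f' z < 0" using e(2)[of "z - x"] z f0 e(1) by auto
    then have "e * f' z < 0" using e(1) by (simp add: mult_pos_neg)
    then have "f (x + e/2) < f x" using z by simp
    then show False using m[of "x + e/2"] by simp
  qed
qed



lemma two_ab: "\<bar>2 * a * b\<bar> \<le> a\<^sup>2 + (b::real)\<^sup>2"
proof -
  have "0 \<le> (a - b)\<^sup>2" "0 \<le> (a + b)\<^sup>2" by simp_all
  then show ?thesis by (simp add: abs_le_iff power2_eq_square algebra_simps)
qed

context
  fixes T :: real and q qt qx qtx :: "real \<times> real \<Rightarrow> real"
  assumes T: "T > 0"
    and dq_t: "\<forall>t\<in>{0<..<T}. \<forall>x. ((\<lambda>s. q (s, x)) has_real_derivative qt (t, x)) (at t)"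
    and dq_x: "\<forall>t\<in>{0<..<T}. \<forall>x. ((\<lambda>y. q (t, y)) has_real_derivative qx (t, x)) (at x)"
    and dqx_t: "\<forall>t\<in>{0<..<T}. \<forall>x. ((\<lambda>s. qx (s, x)) has_real_derivative qtx (t, x)) (at t)"
    and c_q: "continuous_on ({0<..<T} \<times> UNIV) q"
    and c_qt: "continuous_on ({0<..<T} \<times> UNIV) qt"
    and c_qx: "continuous_on ({0<..<T} \<times> UNIV) qx"
    and c_qtx: "continuous_on ({0<..<T} \<times> UNIV) qtx"
    and i_q: "set_integrable lborel ({0<..<T} \<times> UNIV) (\<lambda>z. (q z)\<^sup>2)"
    and i_qt: "set_integrable lborel ({0<..<T} \<times> UNIV) (\<lambda>z. (qt z)\<^sup>2)"
    and i_qx: "set_integrable lborel ({0<..<T} \<times> UNIV) (\<lambda>z. (qx z)\<^sup>2)"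
    and i_qtx: "set_integrable lborel ({0<..<T} \<times> UNIV) (\<lambda>z. (qtx z)\<^sup>2)"
begin

definition "GG w = 4 * (q w)\<^sup>2 + 2 * (qt w)\<^sup>2 + 2 * (qx w)\<^sup>2 + (qtx w)\<^sup>2"
definition "Ge w = ennreal (GG w) * indicator ({0<..<T} \<times> UNIV) w"

lemma GG_nonneg: "GG w \<ge> 0" unfolding GG_def by simp

lemma GG_cont: "continuous_on ({0<..<T} \<times> UNIV) GG"
  unfolding GG_def by (intro continuous_intros c_q c_qt c_qx c_qtx)

lemma Ge_meas: "Ge \<in> borel_measurable borel"
proof -
  have "(\<lambda>w. indicator ({0<..<T} \<times> UNIV) w *\<^sub>R GG w) \<in> borel_measurable borel"
    by (rule borel_measurable_continuous_on_indicator[OF _ GG_cont])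
       (simp add: open_Times borel_open)
  then have "(\<lambda>w. ennreal (indicator ({0<..<T} \<times> UNIV) w *\<^sub>R GG w)) \<in> borel_measurable borel"
    by measurable
  moreover have "(\<lambda>w. ennreal (indicator ({0<..<T} \<times> UNIV) w *\<^sub>R GG w)) = Ge"
    by (auto simp: Ge_def indicator_def fun_eq_iff)
  ultimately show ?thesis by simp
qed

lemma Ge_finite: "(\<integral>\<^sup>+w. Ge w \<partial>lborel) < \<infinity>"
proof -
  have "set_integrable lborel ({0<..<T} \<times> UNIV) GG"
    unfolding GG_def
    by (intro set_integral_add(1) set_integrable_mult_right i_q i_qt i_qx i_qtx)
  then have "(\<integral>\<^sup>+w. ennreal (norm (indicator ({0<..<T} \<times> UNIV) w *\<^sub>R GG w)) \<partial>lborel) < \<infinity>"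
    unfolding set_integrable_def by (simp add: integrable_iff_bounded)
  moreover have "(\<lambda>w. ennreal (norm (indicator ({0<..<T} \<times> UNIV) w *\<^sub>R GG w))) = Ge"
    using GG_nonneg by (auto simp: Ge_def indicator_def fun_eq_iff)
  ultimately show ?thesis by simp
qed

lemma tail:
  assumes e: "e > 0"
  shows "\<exists>N. \<forall>x. \<bar>x\<bar> \<ge> N \<longrightarrow>
     (\<integral>\<^sup>+w. Ge w * indicator (UNIV \<times> {x-1..x+1}) w \<partial>lborel) < ennreal e"
proof -
  define M where "M = density lborel Ge"
  define A where "A n = {w::real\<times>real. real n \<le> \<bar>snd w\<bar>}" for n :: nat
  have Asets: "A n \<in> sets M" for n
  proof -
    have "{w::real\<times>real. real n \<le> \<bar>snd w\<bar>} \<in> sets borel"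
      by (intro borel_closed closed_Collect_le continuous_intros)
    then show ?thesis unfolding M_def A_def by simp
  qed
  have em: "emeasure M (A n) = (\<integral>\<^sup>+w. Ge w * indicator (A n) w \<partial>lborel)" for n
    unfolding M_def using Ge_meas Asets by (subst emeasure_density) (auto simp: M_def)
  have fin: "emeasure M (A n) \<noteq> \<infinity>" for n
  proof -
    have "(\<integral>\<^sup>+w. Ge w * indicator (A n) w \<partial>lborel) \<le> (\<integral>\<^sup>+w. Ge w \<partial>lborel)"
      by (intro nn_integral_mono) (auto simp: indicator_def)
    then show ?thesis using Ge_finite em[of n] by (auto simp: top_unique)
  qed
  have dec: "decseq A" unfolding A_def decseq_def by auto
  have inter: "(\<Inter>n. A n) = {}"
  proof -
    have "w \<notin> (\<Inter>n. A n)" for w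
    proof -
      obtain n :: nat where "\<bar>snd w\<bar> < real n" using reals_Archimedean2 by blast
      then show ?thesis unfolding A_def by (auto simp: not_le intro!: exI[of _ n])
    qed
    then show ?thesis by blast
  qed
  have "(INF n. emeasure M (A n)) = 0"
    using INF_emeasure_decseq[of A M] Asets fin dec inter by auto
  then obtain n where n: "emeasure M (A n) < ennreal e"
    using e by (metis INF_less_iff ennreal_0 ennreal_less_iff order_refl)
  show ?thesis
  proof (intro exI[of _ "real n + 1"] allI impI)
    fix x :: real assume x: "\<bar>x\<bar> \<ge> real n + 1"
    have "(\<integral>\<^sup>+w. Ge w * indicator (UNIV \<times> {x-1..x+1}) w \<partial>lborel) \<le> (\<integral>\<^sup>+w. Ge w * indicator (A n) w \<partial>lborel)"
      using x by (intro nn_integral_mono) (auto simp: indicator_def A_def mult_le_cancel_left1 split: if_splits)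
    then show "(\<integral>\<^sup>+w. Ge w * indicator (UNIV \<times> {x-1..x+1}) w \<partial>lborel) < ennreal e"
      using n em[of n] by simp
  qed
qed

definition "Ay z = (\<integral>\<^sup>+r. Ge (r, z) \<partial>lborel)"
definition "Bs J s = (\<integral>\<^sup>+z. Ge (s, z) * indicator J z \<partial>lborel)"
definition "II J = (\<integral>\<^sup>+w. Ge w * indicator (UNIV \<times> J) w \<partial>lborel)"

lemma fJ_meas:
  assumes "J \<in> sets borel"
  shows "(\<lambda>w. Ge w * indicator (UNIV \<times> J) w) \<in> borel_measurable (lborel \<Otimes>\<^sub>M lborel)"
proof -
  have "(\<lambda>w::real\<times>real. indicator J (snd w) :: ennreal) \<in> borel_measurable borel"
  proof -
    have "(snd :: real\<times>real \<Rightarrow> real) \<in> borel_measurable borel" 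
      by (rule borel_measurable_continuous_onI) (rule continuous_on_snd[OF continuous_on_id, unfolded id_def])
    moreover have "(indicator J :: real \<Rightarrow> ennreal) \<in> borel_measurable borel" using assms by simp
    ultimately show ?thesis by (rule measurable_compose)
  qed
  then have "(\<lambda>w. Ge w * indicator J (snd w)) \<in> borel_measurable borel"
    using Ge_meas by (intro borel_measurable_times_ennreal) auto
  moreover have "(\<lambda>w. Ge w * indicator (UNIV \<times> J) w) = (\<lambda>w. Ge w * indicator J (snd w))"
    by (auto simp: fun_eq_iff indicator_def)
  ultimately show ?thesis unfolding lborel_prod by simp
qed

lemma II_snd:
  assumes "J \<in> sets borel"
  shows "II J = (\<integral>\<^sup>+z. Ay z * indicator J z \<partial>lborel)"
proof -
  have "II J = (\<integral>\<^sup>+z. \<integral>\<^sup>+r. Ge (r, z) * indicator J z \<partial>lborel \<partial>lborel)"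
    unfolding II_def using lborel_pair.nn_integral_snd[OF fJ_meas[OF assms]]
    by (simp add: lborel_prod indicator_times)
  also have "\<dots> = (\<integral>\<^sup>+z. Ay z * indicator J z \<partial>lborel)"
    unfolding Ay_def
    by (intro nn_integral_cong nn_integral_multc) (use Ge_meas in simp)
  finally show ?thesis .
qed

lemma II_fst:
  assumes "J \<in> sets borel"
  shows "II J = (\<integral>\<^sup>+r. Bs J r \<partial>lborel)"
  unfolding II_def Bs_def using lborel.nn_integral_fst[OF fJ_meas[OF assms]]
  by (simp add: lborel_prod indicator_times)

lemma Ay_meas: "Ay \<in> borel_measurable borel"
proof -
  have "(\<lambda>w. Ge (snd w, fst w)) \<in> borel_measurable (lborel \<Otimes>\<^sub>M lborel)"
    unfolding lborel_prod
    by (rule measurable_compose[of "\<lambda>w. (snd w, fst w)" _ borel])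
       (auto intro!: borel_measurable_continuous_onI continuous_intros Ge_meas)
  then have "(\<lambda>z. \<integral>\<^sup>+r. Ge (r, z) \<partial>lborel) \<in> borel_measurable lborel"
    using lborel.borel_measurable_nn_integral_fst[of "\<lambda>w. Ge (snd w, fst w)" lborel] by simp
  then show ?thesis unfolding Ay_def by simp
qed

lemma GG_cont_t: "continuous_on {a..b} (\<lambda>r. GG (r, z))" if "0 < a" "b < T"
  by (rule continuous_on_compose2[OF GG_cont]) (use that in \<open>auto intro!: continuous_intros\<close>)

lemma GG_cont_x: "continuous_on A (\<lambda>z. GG (t, z))" if "t \<in> {0<..<T}"
  by (rule continuous_on_compose2[OF GG_cont]) (use that in \<open>auto intro!: continuous_intros\<close>)

lemma time_bound:
  fixes f f' :: "real \<Rightarrow> real"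
  assumes t: "t \<in> {0<..<T}" and s: "s \<in> {0<..<T}"
    and d: "\<And>r. r \<in> {0<..<T} \<Longrightarrow> (f has_real_derivative f' r) (at r)"
    and le: "\<And>r. r \<in> {0<..<T} \<Longrightarrow> \<bar>f' r\<bar> \<le> GG (r, z)"
  shows "ennreal \<bar>f t - f s\<bar> \<le> Ay z"
proof -
  define lo where "lo = min s t"
  define hi where "hi = max s t"
  have lh: "lo \<le> hi" "0 < lo" "hi < T" using s t by (auto simp: lo_def hi_def)
  have sub: "{lo..hi} \<subseteq> {0<..<T}" using lh by auto
  have "ennreal \<bar>f hi - f lo\<bar> \<le> (\<integral>\<^sup>+r. ennreal (GG (r, z)) * indicator {lo..hi} r \<partial>lborel)"
  proof (rule ftc_abs_bound[OF lh(1), of f f' "\<lambda>r. GG (r, z)"])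
    fix r assume "r \<in> {lo..hi}"
    then have r: "r \<in> {0<..<T}" using sub by blast
    show "(f has_real_derivative f' r) (at r)" using d[OF r] .
    show "\<bar>f' r\<bar> \<le> GG (r, z)" using le[OF r] .
  qed (rule GG_cont_t[OF lh(2,3)])
  also have "\<dots> \<le> Ay z" unfolding Ay_def Ge_def
    by (intro nn_integral_mono) (use sub in \<open>auto simp: indicator_def\<close>)
  finally show ?thesis by (cases "s \<le> t") (auto simp: lo_def hi_def abs_minus_commute)
qed

lemma pt_t:
  assumes t: "t \<in> {0<..<T}" and s: "s \<in> {0<..<T}"
  shows "ennreal \<bar>(q (t, y))\<^sup>2 - (q (s, y))\<^sup>2\<bar> \<le> Ay y"
proof (rule time_bound[OF t s])
  fix r assume r: "r \<in> {0<..<T}"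
  show "((\<lambda>r. (q (r, y))\<^sup>2) has_real_derivative 2 * q (r, y) * qt (r, y)) (at r)"
    using dq_t r by (auto intro!: derivative_eq_intros)
  have "\<bar>2 * q (r, y) * qt (r, y)\<bar> \<le> (q (r, y))\<^sup>2 + (qt (r, y))\<^sup>2"
    by (rule two_ab)
  moreover have "0 \<le> (qx (r, y))\<^sup>2" "0 \<le> (qtx (r, y))\<^sup>2" "0 \<le> (q (r, y))\<^sup>2" "0 \<le> (qt (r, y))\<^sup>2" by simp_all
  ultimately show "\<bar>2 * q (r, y) * qt (r, y)\<bar> \<le> GG (r, y)" unfolding GG_def
    by linarith
qed

lemma pt_b:
  assumes t: "t \<in> {0<..<T}" and s: "s \<in> {0<..<T}"
  shows "ennreal \<bar>2 * q (t, z) * qx (t, z)\<bar> \<le> ennreal (GG (s, z)) + Ay z"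
proof -
  have "ennreal \<bar>2 * q (t, z) * qx (t, z) - 2 * q (s, z) * qx (s, z)\<bar> \<le> Ay z"
  proof (rule time_bound[OF t s])
    fix r assume r: "r \<in> {0<..<T}"
    show "((\<lambda>r. 2 * q (r, z) * qx (r, z)) has_real_derivative
            2 * (qt (r, z) * qx (r, z) + q (r, z) * qtx (r, z))) (at r)"
      using dq_t dqx_t r by (auto intro!: derivative_eq_intros simp: algebra_simps)
    have a: "\<bar>2 * qt (r, z) * qx (r, z)\<bar> \<le> (qt (r, z))\<^sup>2 + (qx (r, z))\<^sup>2"
      by (rule two_ab)
    have b: "\<bar>2 * q (r, z) * qtx (r, z)\<bar> \<le> (q (r, z))\<^sup>2 + (qtx (r, z))\<^sup>2"
      by (rule two_ab)
    have c: "\<bar>2 * (qt (r, z) * qx (r, z) + q (r, z) * qtx (r, z))\<bar> \<le> \<bar>2 * qt (r, z) * qx (r, z)\<bar> + \<bar>2 * q (r, z) * qtx (r, z)\<bar>"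
      by (simp add: distrib_left mult.assoc abs_triangle_ineq)
    have "0 \<le> (qx (r, z))\<^sup>2" "0 \<le> (qtx (r, z))\<^sup>2" "0 \<le> (q (r, z))\<^sup>2" "0 \<le> (qt (r, z))\<^sup>2" by simp_all
    then show "\<bar>2 * (qt (r, z) * qx (r, z) + q (r, z) * qtx (r, z))\<bar> \<le> GG (r, z)"
      using a b c unfolding GG_def by linarith
  qed
  moreover have "\<bar>2 * q (s, z) * qx (s, z)\<bar> \<le> GG (s, z)"
  proof -
    have "\<bar>2 * q (s, z) * qx (s, z)\<bar> \<le> (q (s, z))\<^sup>2 + (qx (s, z))\<^sup>2"
      by (rule two_ab)
    moreover have "0 \<le> (qx (s, z))\<^sup>2" "0 \<le> (qtx (s, z))\<^sup>2" "0 \<le> (q (s, z))\<^sup>2" "0 \<le> (qt (s, z))\<^sup>2" by simp_all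
    ultimately show ?thesis unfolding GG_def by linarith
  qed
  ultimately have "\<bar>2 * q (t, z) * qx (t, z)\<bar> \<le> GG (s, z) + \<bar>2 * q (t, z) * qx (t, z) - 2 * q (s, z) * qx (s, z)\<bar>"
    by linarith
  then have "ennreal \<bar>2 * q (t, z) * qx (t, z)\<bar> \<le> ennreal (GG (s, z) + \<bar>2 * q (t, z) * qx (t, z) - 2 * q (s, z) * qx (s, z)\<bar>)"
    by (rule ennreal_leI)
  also have "\<dots> = ennreal (GG (s, z)) + ennreal \<bar>2 * q (t, z) * qx (t, z) - 2 * q (s, z) * qx (s, z)\<bar>"
    using GG_nonneg by (intro ennreal_plus) auto
  also have "\<dots> \<le> ennreal (GG (s, z)) + Ay z"
    using \<open>ennreal \<bar>_ - _\<bar> \<le> Ay z\<close> by (rule add_left_mono)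
  finally show ?thesis .
qed

lemma pt_x:
  assumes t: "t \<in> {0<..<T}" and s: "s \<in> {0<..<T}" and x: "x \<in> {a..b}" and y: "y \<in> {a..b}"
  shows "ennreal \<bar>(q (t, x))\<^sup>2 - (q (t, y))\<^sup>2\<bar> \<le> Bs {a..b} s + II {a..b}"
proof -
  define lo where "lo = min x y"
  define hi where "hi = max x y"
  have lh: "lo \<le> hi" using x y by (auto simp: lo_def hi_def)
  have sub: "{lo..hi} \<subseteq> {a..b}" using x y by (auto simp: lo_def hi_def)
  have cq: "continuous_on UNIV (\<lambda>z. q (t, z))"
    by (rule continuous_on_compose2[OF c_q]) (use t in \<open>auto intro!: continuous_intros\<close>)
  have cqx: "continuous_on UNIV (\<lambda>z. qx (t, z))"
    by (rule continuous_on_compose2[OF c_qx]) (use t in \<open>auto intro!: continuous_intros\<close>)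
  have "ennreal \<bar>(q (t, hi))\<^sup>2 - (q (t, lo))\<^sup>2\<bar> \<le>
      (\<integral>\<^sup>+z. ennreal \<bar>2 * q (t, z) * qx (t, z)\<bar> * indicator {lo..hi} z \<partial>lborel)"
  proof (rule ftc_abs_bound[OF lh, of _ "\<lambda>z. 2 * q (t, z) * qx (t, z)"])
    fix z
    show "((\<lambda>z. (q (t, z))\<^sup>2) has_real_derivative 2 * q (t, z) * qx (t, z)) (at z)"
      using dq_x t by (auto intro!: derivative_eq_intros)
  next
    show "continuous_on {lo..hi} (\<lambda>z. \<bar>2 * q (t, z) * qx (t, z)\<bar>)"
      by (intro continuous_intros continuous_on_subset[OF cq] continuous_on_subset[OF cqx]) auto
  qed auto
  also have "\<dots> \<le> (\<integral>\<^sup>+z. ennreal \<bar>2 * q (t, z) * qx (t, z)\<bar> * indicator {a..b} z \<partial>lborel)"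
    by (intro nn_integral_mono) (use sub in \<open>auto simp: indicator_def\<close>)
  also have "\<dots> \<le> (\<integral>\<^sup>+z. (ennreal (GG (s, z)) + Ay z) * indicator {a..b} z \<partial>lborel)"
    by (intro nn_integral_mono mult_right_mono pt_b[OF t s]) auto
  also have "\<dots> = (\<integral>\<^sup>+z. ennreal (GG (s, z)) * indicator {a..b} z + Ay z * indicator {a..b} z \<partial>lborel)"
    by (simp add: distrib_right)
  also have "\<dots> = (\<integral>\<^sup>+z. ennreal (GG (s, z)) * indicator {a..b} z \<partial>lborel) + (\<integral>\<^sup>+z. Ay z * indicator {a..b} z \<partial>lborel)"
  proof (rule nn_integral_add)
    have "(\<lambda>z. GG (s, z)) \<in> borel_measurable borel"
      by (rule borel_measurable_continuous_onI[OF GG_cont_x[OF s]])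
    then show "(\<lambda>z. ennreal (GG (s, z)) * indicator {a..b} z) \<in> borel_measurable lborel"
      by simp
    show "(\<lambda>z. Ay z * indicator {a..b} z) \<in> borel_measurable lborel"
      using Ay_meas by simp
  qed
  also have "\<dots> = Bs {a..b} s + II {a..b}"
    using s by (simp add: II_snd Bs_def Ge_def indicator_def)
  finally show ?thesis by (cases "y \<le> x") (auto simp: lo_def hi_def abs_minus_commute)
qed

lemma decay:
  assumes eta: "\<eta> > 0"
  shows "\<exists>R. \<forall>t\<in>{0<..<T}. \<forall>x. \<bar>x\<bar> \<ge> R \<longrightarrow> (q (t, x))\<^sup>2 \<le> \<eta>"
proof -
  define e where "e = \<eta> / (2 + 3 / T)"
  have "2 + 3 / T > 0" using T by (simp add: add_pos_pos)
  then have e: "e > 0" using eta by (simp add: e_def)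
  have eta_eq: "\<eta> = e / T + e + 2 * e / T + e"
  proof -
    have "e / T + e + 2 * e / T + e = e * (2 + 3 / T)" by (simp add: algebra_simps)
    also have "\<dots> = \<eta>" using \<open>2 + 3 / T > 0\<close> by (simp add: e_def)
    finally show ?thesis by simp
  qed
  obtain N where N: "\<And>x. \<bar>x\<bar> \<ge> N \<Longrightarrow> II {x-1..x+1} < ennreal e"
    using tail[OF e] unfolding II_def by blast
  show ?thesis
  proof (intro exI[of _ N] ballI allI impI)
    fix t x assume t: "t \<in> {0<..<T}" and x: "\<bar>x\<bar> \<ge> N"
    define J where "J = {x-1..x+1}"
    have I: "II J < ennreal e" using N[OF x] by (simp add: J_def)
    have J: "J \<in> sets borel" "emeasure lborel J = ennreal 2" by (simp_all add: J_def)
    have ee: "ennreal e < ennreal e * ennreal 2"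
      using e by (simp add: ennreal_mult[symmetric] ennreal_less_iff del: ennreal_numeral)
    have "(\<integral>\<^sup>+z. Ay z * indicator J z \<partial>lborel) < ennreal e * emeasure lborel J"
      using II_snd[OF J(1)] I ee J(2) by simp
    then obtain y where y: "y \<in> J" "Ay y < ennreal e"
      using exists_below_avg[of J lborel Ay] J(1) by auto
    have eT: "ennreal e = ennreal (e / T) * emeasure lborel {0<..<T}"
      using T e by (simp add: ennreal_mult[symmetric])
    have "(\<integral>\<^sup>+r. ennreal ((q (r, y))\<^sup>2) * indicator {0<..<T} r \<partial>lborel) \<le> Ay y"
    proof -
      have qG: "(q (r, y))\<^sup>2 \<le> GG (r, y)" for r
      proof -
        have "0 \<le> (qx (r, y))\<^sup>2" "0 \<le> (qtx (r, y))\<^sup>2" "0 \<le> (q (r, y))\<^sup>2" "0 \<le> (qt (r, y))\<^sup>2" by simp_all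
        then show ?thesis unfolding GG_def by linarith
      qed
      show ?thesis unfolding Ay_def Ge_def
        by (intro nn_integral_mono) (auto simp: indicator_def intro!: ennreal_leI qG)
    qed
    then have "(\<integral>\<^sup>+r. ennreal ((q (r, y))\<^sup>2) * indicator {0<..<T} r \<partial>lborel) < ennreal (e / T) * emeasure lborel {0<..<T}"
      using y(2) eT by simp
    then obtain s' where s': "s' \<in> {0<..<T}" "ennreal ((q (s', y))\<^sup>2) < ennreal (e / T)"
      using exists_below_avg[of "{0<..<T}" lborel "\<lambda>r. ennreal ((q (r, y))\<^sup>2)" "ennreal (e / T)"] by auto
    have eT2: "ennreal e < ennreal (2 * e / T) * emeasure lborel {0<..<T}"
      using T e by (simp add: ennreal_mult[symmetric] ennreal_less_iff del: ennreal_numeral)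
    have "(\<integral>\<^sup>+r. Bs J r * indicator {0<..<T} r \<partial>lborel) = (\<integral>\<^sup>+r. Bs J r \<partial>lborel)"
      by (intro nn_integral_cong) (auto simp: Bs_def Ge_def indicator_def)
    also have "\<dots> = II J" using II_fst[OF J(1)] by simp
    finally have "(\<integral>\<^sup>+r. Bs J r * indicator {0<..<T} r \<partial>lborel) < ennreal (2 * e / T) * emeasure lborel {0<..<T}"
      using I eT2 by simp
    then obtain s where s: "s \<in> {0<..<T}" "Bs J s < ennreal (2 * e / T)"
      using exists_below_avg[of "{0<..<T}" lborel "Bs J" "ennreal (2 * e / T)"] by auto
    have xJ: "x \<in> J" by (simp add: J_def)
    have a1: "ennreal \<bar>(q (t, y))\<^sup>2 - (q (s', y))\<^sup>2\<bar> \<le> ennreal e"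
      using pt_t[OF t s'(1), of y] y(2) by simp
    have a2: "ennreal \<bar>(q (t, x))\<^sup>2 - (q (t, y))\<^sup>2\<bar> \<le> ennreal (2 * e / T) + ennreal e"
    proof -
      have "ennreal \<bar>(q (t, x))\<^sup>2 - (q (t, y))\<^sup>2\<bar> \<le> Bs J s + II J"
        using pt_x[OF t s(1), of x "x-1" "x+1" y] xJ y(1) by (simp add: J_def)
      also have "\<dots> \<le> ennreal (2 * e / T) + ennreal e"
        using s(2) I by (intro add_mono) auto
      finally show ?thesis .
    qed
    have "(q (t, x))\<^sup>2 \<le> (q (s', y))\<^sup>2 + \<bar>(q (t, y))\<^sup>2 - (q (s', y))\<^sup>2\<bar> + \<bar>(q (t, x))\<^sup>2 - (q (t, y))\<^sup>2\<bar>"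
      by linarith
    then have "ennreal ((q (t, x))\<^sup>2) \<le> ennreal ((q (s', y))\<^sup>2 + \<bar>(q (t, y))\<^sup>2 - (q (s', y))\<^sup>2\<bar> + \<bar>(q (t, x))\<^sup>2 - (q (t, y))\<^sup>2\<bar>)"
      by (rule ennreal_leI)
    also have "\<dots> = ennreal ((q (s', y))\<^sup>2) + ennreal \<bar>(q (t, y))\<^sup>2 - (q (s', y))\<^sup>2\<bar> + ennreal \<bar>(q (t, x))\<^sup>2 - (q (t, y))\<^sup>2\<bar>"
      by (simp add: ennreal_plus)
    also have "\<dots> \<le> ennreal (e / T) + ennreal e + (ennreal (2 * e / T) + ennreal e)"
      using s'(2) a1 a2 by (intro add_mono) auto
    also have "\<dots> = ennreal \<eta>"
      using e T by (simp add: eta_eq ennreal_plus[symmetric] del: ennreal_plus)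
    finally show "(q (t, x))\<^sup>2 \<le> \<eta>"
      using eta by (simp add: ennreal_le_iff)
  qed
qed

end


lemma comparison:
  fixes q qt qx qxx :: "real \<times> real \<Rightarrow> real" and B B' :: "real \<Rightarrow> real"
  assumes T': "0 < T'" "T' < T"
    and cont: "continuous_on ({0..T} \<times> UNIV) q"
    and dt: "\<forall>t\<in>{0<..<T}. \<forall>x. ((\<lambda>s. q (s, x)) has_real_derivative qt (t, x)) (at t)"
    and dx: "\<forall>t\<in>{0<..<T}. \<forall>x. ((\<lambda>y. q (t, y)) has_real_derivative qx (t, x)) (at x)"
    and dxx: "\<forall>t\<in>{0<..<T}. \<forall>x. ((\<lambda>y. qx (t, y)) has_real_derivative qxx (t, x)) (at x)"
    and init: "\<forall>x. q (0, x) \<ge> 0"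
    and decay: "\<forall>\<eta>>0. \<exists>R. \<forall>t\<in>{0<..<T}. \<forall>x. \<bar>x\<bar> \<ge> R \<longrightarrow> q (t, x) > - \<eta>"
    and KI: "\<forall>t\<in>{0<..<T}. \<forall>x. q (t, x) < 0 \<longrightarrow> qx (t, x) = 0 \<longrightarrow> qxx (t, x) \<ge> 0 \<longrightarrow>
               qt (t, x) \<ge> - c + lam * q (t, x)"
    and Bd: "\<forall>t. (B has_real_derivative B' t) (at t)"
    and Bneg: "\<forall>t\<in>{0..T'}. B t < 0"
    and Bder: "\<forall>t\<in>{0..T'}. B' t < - c + lam * B t"
  shows "\<forall>t\<in>{0..T'}. \<forall>x. q (t, x) > B t"
proof (rule ccontr)
  assume "\<not> ?thesis"
  then obtain t0 x0 where t0: "t0 \<in> {0..T'}" and x0: "q (t0, x0) \<le> B t0" by (auto simp: not_less)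
  have Bc: "continuous_on UNIV B"
    using Bd by (meson DERIV_isCont continuous_at_imp_continuous_on)
  obtain tm where tm: "tm \<in> {0..T'}" "\<forall>t\<in>{0..T'}. B t \<le> B tm"
    using continuous_attains_sup[of "{0..T'}" B] continuous_on_subset[OF Bc] T' by auto
  define \<eta> where "\<eta> = - B tm"
  have eta: "\<eta> > 0" "\<forall>t\<in>{0..T'}. B t \<le> - \<eta>" using tm Bneg by (auto simp: \<eta>_def)
  obtain R where R: "\<forall>t\<in>{0<..<T}. \<forall>x. \<bar>x\<bar> \<ge> R \<longrightarrow> q (t, x) > - \<eta>"
    using decay eta(1) by blast
  have claim0: "q (t, x) > B t" if "t \<in> {0..T'}" "\<bar>x\<bar> \<ge> R" for t x
  proof (cases "t = 0")
    case True then show ?thesis using init Bneg that by (metis order_less_le_trans)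
  next
    case False
    then have "t \<in> {0<..<T}" using that T' by auto
    then have "q (t, x) > - \<eta>" using R that by blast
    moreover have "B t \<le> - \<eta>" using eta(2) that by blast
    ultimately show ?thesis by linarith
  qed
  define S where "S = {0..T'} \<times> {-R..R}"
  define K where "K = S \<inter> (\<lambda>p. q p - B (fst p)) -` {..0}"
  have Ssub: "S \<subseteq> {0..T} \<times> UNIV" using T' by (auto simp: S_def)
  have cK: "continuous_on S (\<lambda>p. q p - B (fst p))"
    by (intro continuous_intros continuous_on_subset[OF cont Ssub] continuous_on_compose2[OF Bc]) auto
  have "closed K" unfolding K_def
    by (rule continuous_closed_preimage[OF cK]) (auto simp: S_def closed_Times)
  moreover have "compact S" unfolding S_def by (intro compact_Times compact_Icc)
  ultimately have compK: "compact K" unfolding K_def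
    by (metis inf.absorb_iff2 Int_lower1 compact_Int_closed K_def)
  have "(t0, x0) \<in> K"
  proof -
    have "\<bar>x0\<bar> < R" using claim0[OF t0] x0 by (meson not_le not_less)
    then show ?thesis using t0 x0 by (auto simp: K_def S_def)
  qed
  then have "K \<noteq> {}" by blast
  have "\<exists>x\<in>K. \<forall>y\<in>K. fst x \<le> fst y"
    by (rule continuous_attains_inf[OF compK \<open>K \<noteq> {}\<close>]) (rule continuous_on_fst[OF continuous_on_id, unfolded id_def])
  then obtain p where p: "p \<in> K" "\<forall>p'\<in>K. fst p \<le> fst p'" by blast
  obtain ts xs where pe: "p = (ts, xs)" by (cases p)
  have ts: "ts \<in> {0..T'}" "q (ts, xs) \<le> B ts" using p(1) by (auto simp: K_def S_def pe)
  have ts0: "ts > 0"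
  proof (rule ccontr)
    assume "\<not> ts > 0" then have "ts = 0" using ts by auto
    then show False using init Bneg ts by (metis atLeastAtMost_iff order.refl not_le order.strict_trans2 T'(1) less_imp_le)
  qed
  have tsT: "ts \<in> {0<..<T}" using ts ts0 T' by auto
  have minim: "q (s, y) > B s" if "s \<in> {0..<ts}" for s y
  proof (rule ccontr)
    assume a: "\<not> q (s, y) > B s"
    have sT: "s \<in> {0..T'}" using that ts by auto
    then have "\<bar>y\<bar> < R" using claim0[OF sT] a by (meson not_le)
    then have "(s, y) \<in> K" using sT a by (auto simp: K_def S_def)
    then show False using p(2) that by (auto simp: pe)
  qed
  have ge: "q (ts, y) \<ge> B ts" for y
  proof (rule ccontr)
    assume a: "\<not> q (ts, y) \<ge> B ts"
    have "((\<lambda>s. q (s, y) - B s) has_real_derivative qt (ts, y) - B' ts) (at ts)"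
      using dt tsT Bd by (auto intro!: derivative_eq_intros)
    then have "isCont (\<lambda>s. q (s, y) - B s) ts" by (rule DERIV_isCont)
    moreover have "q (ts, y) - B ts < 0" using a by simp
    ultimately have "\<forall>\<^sub>F s in at ts. q (s, y) - B s < 0"
      by (metis isCont_def order_tendstoD(2))
    then obtain d where d: "d > 0" "\<And>s. s \<noteq> ts \<Longrightarrow> dist s ts < d \<Longrightarrow> q (s, y) - B s < 0"
      by (auto simp: eventually_at)
    define s where "s = ts - min (d/2) ts"
    have s: "s \<in> {0..<ts}" "s \<noteq> ts" "dist s ts < d" using d ts0 by (auto simp: s_def dist_real_def)
    have "q (s, y) - B s < 0" using d(2)[OF s(2,3)] .
    moreover have "B s < q (s, y)" using minim[OF s(1)] .
    ultimately show False by linarith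
  qed
  have eq: "q (ts, xs) = B ts" using ts(2) ge[of xs] by simp
  have neg: "q (ts, xs) < 0" using eq Bneg ts(1) by simp
  have sd: "qx (ts, xs) = 0" "0 \<le> qxx (ts, xs)"
    using second_deriv_min[of "\<lambda>y. q (ts, y)" "\<lambda>y. qx (ts, y)" "qxx (ts, xs)" xs] dx dxx tsT ge eq
    by auto
  have "qt (ts, xs) \<ge> - c + lam * q (ts, xs)" using KI tsT neg sd by blast
  then have pos: "qt (ts, xs) - B' ts > 0" using Bder ts(1) eq by fastforce
  have "((\<lambda>s. q (s, xs) - B s) has_real_derivative qt (ts, xs) - B' ts) (at ts)"
    using dt tsT Bd by (auto intro!: derivative_eq_intros)
  from DERIV_pos_inc_left[OF this pos] obtain d where d: "d > 0"
    "\<And>h. h > 0 \<Longrightarrow> h < d \<Longrightarrow> q (ts - h, xs) - B (ts - h) < q (ts, xs) - B ts" by blast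
  define h where "h = min (d/2) ts"
  have h: "h > 0" "h < d" "ts - h \<in> {0..<ts}" using d ts0 by (auto simp: h_def)
  show False using d(2)[OF h(1,2)] minim[OF h(3), of xs] eq by simp
qed



theorem mainTheorem6:
  fixes Vd od :: "nat \<Rightarrow> real \<Rightarrow> real"
    and q0 :: "real \<Rightarrow> real"
    and q :: "real \<times> real \<Rightarrow> real"
    and T \<nu> \<epsilon> :: real
  assumes "T > 0" and "\<nu> > 0" and "\<epsilon> > 0"
    and "admissible_V Vd"
    and "admissible_o od"
    and "bounded_variation q0" and "q0 \<in> borel_measurable lborel" and "\<forall>x. q0 x \<ge> 0"
    and "\<exists>\<delta>>0. AE x in lborel. od 0 x - q0 x \<ge> \<delta>"
    and "viscous_solution Vd od \<epsilon> \<nu> T (mollify \<nu> q0) q"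
  shows "\<forall>t\<in>{0..T}. \<forall>x.
     q (t, x) \<ge>
       - (\<nu> * (SUP y. \<bar>od 2 y\<bar>) /
            ((SUP y. \<bar>od 1 y\<bar>) * (SUP y\<in>{Inf (range (od 0))..}. \<bar>Vd 1 (y / \<epsilon>) / \<epsilon>\<bar>)))
         * (-1 + exp ((SUP y\<in>{Inf (range (od 0))..}. \<bar>Vd 1 (y / \<epsilon>) / \<epsilon>\<bar>)
                      * (SUP y. \<bar>od 1 y\<bar>) * t))"
proof -
  note T = assms(1) and nu = assms(2) and eps = assms(3)
  from assms(10) obtain D where
    D00: "D 0 0 = q" and
    Dd: "\<forall>i j. i + j < 5 \<longrightarrow> (\<forall>t\<in>{0<..<T}. \<forall>x.
            ((\<lambda>s. D i j (s, x)) has_real_derivative D (Suc i) j (t, x)) (at t) \<and>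
            ((\<lambda>y. D i j (t, y)) has_real_derivative D i (Suc j) (t, x)) (at x))" and
    Dc: "\<forall>i j. i + j \<le> 5 \<longrightarrow>
            continuous_on ({0<..<T} \<times> UNIV) (D i j) \<and>
            set_integrable lborel ({0<..<T} \<times> UNIV) (\<lambda>z. (D i j z)\<^sup>2)" and
    qc: "continuous_on ({0..T} \<times> UNIV) q" and
    qinit: "\<forall>x. q (0, x) = mollify \<nu> q0 x" and
    pde: "\<forall>t\<in>{0<..<T}. \<forall>x.
            ((\<lambda>y. Vd 0 ((od 0 y - q (t, y)) / \<epsilon>) * q (t, y)) has_real_derivative
               (\<nu> * (D 0 2 (t, x) - od 2 x) - D 1 0 (t, x))) (at x)"
    unfolding viscous_solution_def by blast
  have Dd': "((\<lambda>s. D i j (s, x)) has_real_derivative D (Suc i) j (t, x)) (at t)"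
            "((\<lambda>y. D i j (t, y)) has_real_derivative D i (Suc j) (t, x)) (at x)"
    if "i + j < 5" "t \<in> {0<..<T}" for i j t x
    using Dd that by blast+
  have Dc': "continuous_on ({0<..<T} \<times> UNIV) (D i j)"
            "set_integrable lborel ({0<..<T} \<times> UNIV) (\<lambda>z. (D i j z)\<^sup>2)"
    if "i + j \<le> 5" for i j
    using Dc that by blast+
  have dq_t: "\<forall>t\<in>{0<..<T}. \<forall>x. ((\<lambda>s. q (s, x)) has_real_derivative D 1 0 (t, x)) (at t)"
    using Dd'(1)[of 0 0] D00 by simp
  have dq_x: "\<forall>t\<in>{0<..<T}. \<forall>x. ((\<lambda>y. q (t, y)) has_real_derivative D 0 1 (t, x)) (at x)"
    using Dd'(2)[of 0 0] D00 by simp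
  have dqx_t: "\<forall>t\<in>{0<..<T}. \<forall>x. ((\<lambda>s. D 0 1 (s, x)) has_real_derivative D 1 1 (t, x)) (at t)"
    using Dd'(1)[of 0 1] by simp
  have dqx_x: "\<forall>t\<in>{0<..<T}. \<forall>x. ((\<lambda>y. D 0 1 (t, y)) has_real_derivative D 0 2 (t, x)) (at x)"
    using Dd'(2)[of 0 1] by (simp add: numeral_2_eq_2)
  have dec0: "\<exists>R. \<forall>t\<in>{0<..<T}. \<forall>x. \<bar>x\<bar> \<ge> R \<longrightarrow> (q (t, x))\<^sup>2 \<le> \<eta>" if "\<eta> > 0" for \<eta>
    using decay[OF T dq_t dq_x dqx_t _ Dc'(1)[of 1 0] Dc'(1)[of 0 1] Dc'(1)[of 1 1] _
        Dc'(2)[of 1 0] Dc'(2)[of 0 1] Dc'(2)[of 1 1] that] Dc'[of 0 0] D00 by simp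
  have dec: "\<forall>\<eta>>0. \<exists>R. \<forall>t\<in>{0<..<T}. \<forall>x. \<bar>x\<bar> \<ge> R \<longrightarrow> q (t, x) > - \<eta>"
  proof (intro allI impI)
    fix \<eta> :: real assume e: "\<eta> > 0"
    then obtain R where R: "\<forall>t\<in>{0<..<T}. \<forall>x. \<bar>x\<bar> \<ge> R \<longrightarrow> (q (t, x))\<^sup>2 \<le> \<eta>\<^sup>2 / 2"
      using dec0[of "\<eta>\<^sup>2 / 2"] by auto
    show "\<exists>R. \<forall>t\<in>{0<..<T}. \<forall>x. \<bar>x\<bar> \<ge> R \<longrightarrow> q (t, x) > - \<eta>"
    proof (intro exI[of _ R] ballI allI impI)
      fix t x assume t: "t \<in> {0<..<T}" and x: "\<bar>x\<bar> \<ge> R"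
      show "q (t, x) > - \<eta>"
      proof (rule ccontr)
        assume "\<not> q (t, x) > - \<eta>"
        then have "\<eta> \<le> - q (t, x)" by simp
        then have "\<eta>\<^sup>2 \<le> (- q (t, x))\<^sup>2" using e by (intro power_mono) auto
        then have "\<eta>\<^sup>2 \<le> (q (t, x))\<^sup>2" by simp
        moreover have "(q (t, x))\<^sup>2 \<le> \<eta>\<^sup>2 / 2" using R t x by blast
        moreover have "\<eta>\<^sup>2 > 0" using e by simp
        ultimately show False by linarith
      qed
    qed
  qed
  have init: "\<forall>x. q (0, x) \<ge> 0"
  proof
    fix x
    have "0 \<le> std_mollifier_raw y" for y by (simp add: std_mollifier_raw_def)
    then have "0 \<le> std_mollifier y" for y
      unfolding std_mollifier_def by (intro divide_nonneg_nonneg) (auto intro!: integral_nonneg_AE)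
    then have "0 \<le> mollifier \<nu> y" for y using nu unfolding mollifier_def by simp
    then have "0 \<le> mollify \<nu> q0 x" unfolding mollify_def using assms(8)
      by (intro integral_nonneg_AE AE_I2 mult_nonneg_nonneg) auto
    then show "q (0, x) \<ge> 0" using qinit by simp
  qed
  note AV = assms(4)[unfolded admissible_V_def]
  note AO = assms(5)[unfolded admissible_o_def]
  have VdD: "\<forall>k. \<forall>x\<ge>0. (Vd k has_real_derivative Vd (Suc k) x) (at x within {0..})"
    using AV by (rule conjunct1)
  have Vsign: "\<forall>k\<ge>1. \<forall>x\<ge>0. (-1) ^ (k + 1) * Vd k x > 0"
    using AV[THEN conjunct2, THEN conjunct2, THEN conjunct2, THEN conjunct2, THEN conjunct1] .
  have Vbdd: "\<forall>k. \<exists>B. \<forall>x\<ge>0. \<bar>Vd k x\<bar> \<le> B"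
    using AV[THEN conjunct2, THEN conjunct2, THEN conjunct2, THEN conjunct2, THEN conjunct2, THEN conjunct1] .
  have odD: "\<forall>k<5. \<forall>x. (od k has_real_derivative od (Suc k) x) (at x)"
    using AO by (rule conjunct1)
  have odB: "\<forall>k\<le>5. bounded (range (od k))"
    using AO[THEN conjunct2, THEN conjunct1] .
  have V1pos: "Vd 1 x > 0" if "x \<ge> 0" for x using Vsign[rule_format, of 1 x] that by simp
  have od0c: "continuous_on UNIV (od 0)"
  proof (rule continuous_at_imp_continuous_on, rule ballI)
    fix x :: real
    have "(od 0 has_real_derivative od 1 x) (at x)" using odD[rule_format, of 0 x] by simp
    then show "isCont (od 0) x" by (rule DERIV_isCont)
  qed
  have o_nonneg: "od 0 x \<ge> 0" for x
  proof -
    obtain \<delta> where d: "\<delta> > 0" "AE x in lborel. od 0 x - q0 x \<ge> \<delta>" using assms(9) by blast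
    have imp: "x \<in> {x. 0 \<le> od 0 x}" if "od 0 x - q0 x \<ge> \<delta>" for x
      using assms(8)[rule_format, of x] d(1) that by simp
    have "AE x in lborel. x \<in> {x. 0 \<le> od 0 x}"
      by (rule eventually_mono[OF d(2) imp])
    then have "AE x in lebesgue. x \<in> {x. 0 \<le> od 0 x}" by (rule AE_completion)
    moreover have "closed {x. 0 \<le> od 0 x}"
      by (rule closed_Collect_le[OF continuous_on_const od0c])
    ultimately show ?thesis using mem_closed_if_AE_lebesgue by blast
  qed
  have bdd_od: "bdd_above (range (\<lambda>y. \<bar>od k y\<bar>))" if "k \<le> 5" for k
  proof -
    have "bounded (range (od k))" using odB that by blast
    then obtain a where "\<forall>x\<in>range (od k). norm x \<le> a" unfolding bounded_iff by blast
    then show ?thesis by (intro bdd_aboveI2[of _ _ a]) auto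
  qed
  define S1 where "S1 = (SUP y. \<bar>od 1 y\<bar>)"
  define S2 where "S2 = (SUP y. \<bar>od 2 y\<bar>)"
  define c0 where "c0 = Inf (range (od 0))"
  define K where "K = (SUP y\<in>{c0..}. \<bar>Vd 1 (y / \<epsilon>) / \<epsilon>\<bar>)"
  have S1b: "\<bar>od 1 y\<bar> \<le> S1" for y unfolding S1_def by (rule cSUP_upper[OF _ bdd_od]) simp_all
  have S2b: "\<bar>od 2 y\<bar> \<le> S2" for y unfolding S2_def by (rule cSUP_upper[OF _ bdd_od]) simp_all
  have S1nn: "S1 \<ge> 0" using S1b[of 0] by linarith
  have S2nn: "S2 \<ge> 0" using S2b[of 0] by linarith
  have c0le: "c0 \<le> od 0 x" for x
  proof -
    have "bdd_below (range (od 0))" using odB[rule_format, of 0] by (simp add: bounded_imp_bdd_below)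
    then show ?thesis unfolding c0_def by (rule cInf_lower[OF rangeI])
  qed
  have c0nn: "c0 \<ge> 0"
    unfolding c0_def by (rule cInf_greatest) (auto simp: o_nonneg)
  obtain BV where BV: "\<forall>x\<ge>0. \<bar>Vd 1 x\<bar> \<le> BV" using Vbdd by blast
  have bddK: "bdd_above ((\<lambda>y. \<bar>Vd 1 (y / \<epsilon>) / \<epsilon>\<bar>) ` {c0..})"
  proof (rule bdd_aboveI2[of _ _ "BV / \<epsilon>"])
    fix y assume "y \<in> {c0..}"
    then have "y / \<epsilon> \<ge> 0" using c0nn eps by auto
    then have "\<bar>Vd 1 (y / \<epsilon>)\<bar> \<le> BV" using BV by blast
    then show "\<bar>Vd 1 (y / \<epsilon>) / \<epsilon>\<bar> \<le> BV / \<epsilon>" using eps by (simp add: divide_right_mono)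
  qed
  have Kb: "\<bar>Vd 1 (y / \<epsilon>) / \<epsilon>\<bar> \<le> K" if "y \<ge> c0" for y
    unfolding K_def by (rule cSUP_upper[OF _ bddK]) (use that in simp)
  have Kpos: "K > 0"
  proof -
    have "Vd 1 (c0 / \<epsilon>) > 0" using V1pos c0nn eps by auto
    then have "\<bar>Vd 1 (c0 / \<epsilon>) / \<epsilon>\<bar> > 0" using eps by simp
    then show ?thesis using Kb[of c0] by linarith
  qed
  have S1z: "S2 = 0" if "S1 = 0"
  proof -
    have "od 1 y = 0" for y using S1b[of y] that by simp
    then have o1: "od 1 = (\<lambda>_. 0)" by auto
    have d1: "(od 1 has_real_derivative od 2 y) (at y)" for y
      using odD[rule_format, of 1 y] by (simp add: eval_nat_numeral)
    have "od 2 y = 0" for y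
      using DERIV_unique[OF d1[of y, unfolded o1] DERIV_const] .
    then show ?thesis unfolding S2_def by simp
  qed
  define c where "c = \<nu> * S2"
  define lam where "lam = K * S1"
  define k where "k = c / lam"
  have lam_nn: "lam \<ge> 0" using Kpos S1nn by (simp add: lam_def)
  have c_nn: "c \<ge> 0" using nu S2nn by (simp add: c_def)
  have k_nn: "k \<ge> 0" using lam_nn c_nn by (simp add: k_def)
  have ck: "c = k * lam"
  proof (cases "lam = 0")
    case True
    then have "S1 = 0" using Kpos by (simp add: lam_def)
    then show ?thesis using S1z True by (simp add: c_def)
  next
    case False then show ?thesis by (simp add: k_def)
  qed
  have KI: "\<forall>t\<in>{0<..<T}. \<forall>x. q (t, x) < 0 \<longrightarrow> D 0 1 (t, x) = 0 \<longrightarrow> D 0 2 (t, x) \<ge> 0 \<longrightarrow>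
               D 1 0 (t, x) \<ge> - c + lam * q (t, x)"
  proof (intro ballI allI impI)
    fix t x assume t: "t \<in> {0<..<T}" and qn: "q (t, x) < 0" and qx0: "D 0 1 (t, x) = 0"
      and qxx: "D 0 2 (t, x) \<ge> 0"
    define y where "y = od 0 x - q (t, x)"
    define u where "u = y / \<epsilon>"
    have yc0: "y \<ge> c0" using c0le[of x] qn by (simp add: y_def)
    have upos: "u > 0" using o_nonneg[of x] qn eps by (simp add: u_def y_def)
    have "(Vd 0 has_real_derivative Vd 1 u) (at u within {0..})"
      using VdD[rule_format, of u 0] upos by simp
    moreover have "at u within {0..} = at u"
      by (rule at_within_interior) (use upos in simp)
    ultimately have dV: "(Vd 0 has_real_derivative Vd 1 u) (at u)" by simp
    have do0: "(od 0 has_real_derivative od 1 x) (at x)" using odD[rule_format, of 0 x] by simp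
    have du: "((\<lambda>y. (od 0 y - q (t, y)) / \<epsilon>) has_real_derivative (od 1 x - D 0 1 (t, x)) / \<epsilon>) (at x)"
      using do0 dq_x t eps by (auto intro!: derivative_eq_intros)
    have uu: "(od 0 x - q (t, x)) / \<epsilon> = u" by (simp add: u_def y_def)
    have dF: "((\<lambda>y. Vd 0 ((od 0 y - q (t, y)) / \<epsilon>) * q (t, y)) has_real_derivative
        Vd 1 u * ((od 1 x - D 0 1 (t, x)) / \<epsilon>) * q (t, x) + D 0 1 (t, x) * Vd 0 u) (at x)"
      using DERIV_mult[OF DERIV_chain2[OF dV[folded uu] du] dq_x[rule_format, OF t, of x]] uu by simp
    have eq: "\<nu> * (D 0 2 (t, x) - od 2 x) - D 1 0 (t, x) = (Vd 1 u / \<epsilon>) * od 1 x * q (t, x)"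
      using DERIV_unique[OF pde[rule_format, OF t, of x] dF] qx0 by simp
    have b1: "\<bar>Vd 1 u / \<epsilon>\<bar> \<le> K" using Kb[OF yc0] by (simp add: u_def)
    have b2: "\<bar>od 1 x\<bar> \<le> S1" by (rule S1b)
    have "\<bar>(Vd 1 u / \<epsilon>) * od 1 x\<bar> \<le> K * S1"
      unfolding abs_mult by (rule mult_mono[OF b1 b2]) (use Kpos in auto)
    then have "\<bar>(Vd 1 u / \<epsilon>) * od 1 x\<bar> * \<bar>q (t, x)\<bar> \<le> K * S1 * \<bar>q (t, x)\<bar>"
      by (rule mult_right_mono) simp
    then have "\<bar>(Vd 1 u / \<epsilon>) * od 1 x * q (t, x)\<bar> \<le> K * S1 * \<bar>q (t, x)\<bar>"
      by (simp only: abs_mult)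
    moreover have "(Vd 1 u / \<epsilon>) * od 1 x * q (t, x) \<le> \<bar>(Vd 1 u / \<epsilon>) * od 1 x * q (t, x)\<bar>"
      by (rule abs_ge_self)
    moreover have "K * S1 * \<bar>q (t, x)\<bar> = - (lam * q (t, x))" using qn by (simp add: lam_def)
    ultimately have b3: "(Vd 1 u / \<epsilon>) * od 1 x * q (t, x) \<le> - (lam * q (t, x))"
      by linarith
    have b4: "\<nu> * od 2 x \<le> c"
      unfolding c_def using S2b[of x] nu by (intro mult_left_mono) auto
    have b5: "\<nu> * D 0 2 (t, x) \<ge> 0" using nu qxx by simp
    have "D 1 0 (t, x) = \<nu> * D 0 2 (t, x) - \<nu> * od 2 x - (Vd 1 u / \<epsilon>) * od 1 x * q (t, x)"
      using eq by (simp add: algebra_simps)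
    then show "D 1 0 (t, x) \<ge> - c + lam * q (t, x)" using b3 b4 b5 by linarith
  qed
  define B0 where "B0 t = - k * (exp (lam * t) - 1)" for t
  have bar: "q (t, x) > B0 t - \<delta> * (1 + t) * exp (lam * t)"
    if d: "\<delta> > 0" and t: "t \<in> {0..T'}" and T': "0 < T'" "T' < T" for \<delta> t x T'
  proof -
    define B where "B t = B0 t - \<delta> * (1 + t) * exp (lam * t)" for t
    define B' where "B' t = - k * (lam * exp (lam * t)) - \<delta> * exp (lam * t) - \<delta> * (1 + t) * (lam * exp (lam * t))" for t
    have Bd: "\<forall>t. (B has_real_derivative B' t) (at t)"
      unfolding B_def B'_def B0_def by (auto intro!: derivative_eq_intros simp: algebra_simps)
    have Bneg: "\<forall>t\<in>{0..T'}. B t < 0"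
    proof
      fix t assume t: "t \<in> {0..T'}"
      have "exp (lam * t) \<ge> 1" using lam_nn t by simp
      then have "k * (exp (lam * t) - 1) \<ge> 0" using k_nn by simp
      moreover have "\<delta> * (1 + t) * exp (lam * t) > 0" using d t by simp
      ultimately show "B t < 0" by (simp add: B_def B0_def)
    qed
    have Bder: "\<forall>t\<in>{0..T'}. B' t < - c + lam * B t"
    proof
      fix t assume t: "t \<in> {0..T'}"
      have "B' t - (- c + lam * B t) = - \<delta> * exp (lam * t)"
        unfolding B'_def B_def B0_def ck by (simp add: algebra_simps)
      moreover have "\<delta> * exp (lam * t) > 0" using d by simp
      ultimately show "B' t < - c + lam * B t" by simp
    qed
    have "\<forall>t\<in>{0..T'}. \<forall>x. q (t, x) > B t"
      by (rule comparison[OF T' qc dq_t dq_x dqx_x init dec KI Bd Bneg Bder])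
    then show ?thesis using t by (simp add: B_def)
  qed
  have main: "q (t, x) \<ge> B0 t" if t: "t \<in> {0..<T}" for t x
  proof (rule ccontr)
    assume a: "\<not> q (t, x) \<ge> B0 t"
    define T' where "T' = (t + T) / 2"
    have T': "0 < T'" "T' < T" "t \<in> {0..T'}" using t T by (auto simp: T'_def)
    define \<delta> where "\<delta> = (B0 t - q (t, x)) / ((1 + t) * exp (lam * t))"
    have pos: "(1 + t) * exp (lam * t) > 0" using t by simp
    have d: "\<delta> > 0" using a pos by (simp add: \<delta>_def)
    have "\<delta> * (1 + t) * exp (lam * t) = B0 t - q (t, x)"
      using pos t by (simp add: \<delta>_def)
    then show False using bar[OF d T'(3) T'(1,2), of x] by simp
  qed
  have final: "q (t, x) \<ge> B0 t" if t: "t \<in> {0..T}" for t x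
  proof (cases "t < T")
    case True then show ?thesis using main t by auto
  next
    case False
    then have tT: "t = T" using t by simp
    define f where "f s = q (s, x) - B0 s" for s
    have fc: "continuous_on {0..T} f"
      unfolding f_def B0_def
      by (intro continuous_intros continuous_on_compose2[OF qc]) auto
    have "closed ({0..T} \<inter> f -` {0..})"
      by (rule continuous_closed_preimage[OF fc]) auto
    moreover have "{0..<T} \<subseteq> {0..T} \<inter> f -` {0..}"
      using main by (auto simp: f_def)
    ultimately have "closure {0..<T} \<subseteq> {0..T} \<inter> f -` {0..}"
      by (rule closure_minimal[rotated])
    then have "{0..T} \<subseteq> f -` {0..}" using T by simp
    moreover have "T \<in> {0..T}" using T by simp
    ultimately have "T \<in> f -` {0..}" by blast
    then show ?thesis using tT by (simp add: f_def)
  qed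
  have "- (\<nu> * S2 / (S1 * K)) * (-1 + exp (K * S1 * t)) = B0 t" for t
    by (simp add: B0_def k_def c_def lam_def mult.commute)
  then have "\<forall>t\<in>{0..T}. \<forall>x. q (t, x) \<ge> - (\<nu> * S2 / (S1 * K)) * (-1 + exp (K * S1 * t))"
    using final by simp
  then show ?thesis unfolding S1_def S2_def K_def c0_def .
qed


end
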